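(* The operator $T_2\,\omega_r^{1/2}$, defined on the subspace $D_0$, is bounded.
   Context: Let $\mathcal{K}=L^2(\mathbb{R}^3,d^3k)$, $\omega(\vec k)=|\vec k|$. Let $\Gamma$ be the antiunitary involution $(\Gamma v)(\vec k)=\overline{v(-\vec k)}$. For $\epsilon>0$ let $P_\epsilon$ be the orthogonal projection onto $\{v\in\mathcal{K}: v(\vec k)=0\text{ for }|\vec k|<\epsilon\}$, and $D_0=\bigcup_{\epsilon>0}P_\epsilon\mathcal{K}$. Fix a strictly decreasing sequence $(\epsilon_i)_{i\in\mathbb{N}}$ of positive numbers with $\epsilon_i\to0$; put $P_i=P_{\epsilon_{i+1}}-P_{\epsilon_i}$ for $i\in\mathbb{N}$ and $P_0=P_{\epsilon_1}$. Fix finite-rank orthogonal projections $Q_i$ ($i\in\mathbb{N}$) with $Q_i\Gamma=\Gamma Q_i$ and $Q_iP_i=Q_i$, and numbers $b_i\in(0,1)$ with $b_i\to0$ and $\sum_i\frac{\epsilon_i}{b_i^2}\mathrm{rk}\,Q_i<\infty$. On $D_0$ define $T_2=\mathbf{1}+\sum_i(\frac{1}{b_i}-1)Q_i$ (only finitely many terms act nontrivially on any vector of $D_0$). Let $\omega_r=\omega(\mathbf{1}-P_0)+\epsilon_1P_0$; note $\omega_r^{1/2}D_0=D_0$. *)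

theory Defs
  imports "HOL-Analysis.Analysis"
begin

text \<open>The Hilbert space K = L^2(R^3, d^3k), represented by (representatives of)
  square-integrable complex functions on real^3 w.r.t. Lebesgue measure.\<close>

type_synonym vec3 = "real ^ 3"
type_synonym kfun = "vec3 \<Rightarrow> complex"

definition L2 :: "kfun set" where
  "L2 = {f. f \<in> borel_measurable lebesgue \<and> integrable lebesgue (\<lambda>k. (cmod (f k))^2)}"

definition l2inner :: "kfun \<Rightarrow> kfun \<Rightarrow> complex" where
  "l2inner f g = (LINT k|lebesgue. cnj (f k) * g k)"

definition l2norm :: "kfun \<Rightarrow> real" where
  "l2norm f = sqrt (LINT k|lebesgue. (cmod (f k))^2)"

definition Gam :: "kfun \<Rightarrow> kfun" where
  "Gam v = (\<lambda>k. cnj (v (- k)))"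

definition Pcut :: "real \<Rightarrow> kfun \<Rightarrow> kfun" where
  "Pcut eps v = (\<lambda>k. if norm k < eps then 0 else v k)"

text \<open>D_0 = union over eps>0 of P_eps K.\<close>
definition D0 :: "kfun set" where
  "D0 = {v \<in> L2. \<exists>eps>0. AE k in lebesgue. norm k < eps \<longrightarrow> v k = 0}"

definition Pshell :: "(nat \<Rightarrow> real) \<Rightarrow> nat \<Rightarrow> kfun \<Rightarrow> kfun" where
  "Pshell eps i v = (\<lambda>k. Pcut (eps (Suc i)) v k - Pcut (eps i) v k)"

text \<open>Finite-rank orthogonal projection with orthonormal basis e 0, ..., e (r-1) of its range:
  Q v = sum_j <e_j, v> e_j.\<close>
definition fproj :: "(nat \<Rightarrow> kfun) \<Rightarrow> nat \<Rightarrow> kfun \<Rightarrow> kfun" where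
  "fproj e r v = (\<lambda>k. \<Sum>j<r. l2inner (e j) v * e j k)"

definition orthonormal_fam :: "(nat \<Rightarrow> kfun) \<Rightarrow> nat \<Rightarrow> bool" where
  "orthonormal_fam e r \<longleftrightarrow> (\<forall>j<r. e j \<in> L2) \<and>
     (\<forall>j<r. \<forall>l<r. l2inner (e j) (e l) = (if j = l then 1 else 0))"

text \<open>T_2 = 1 + sum_{i>=1} (1/b_i - 1) Q_i, with Q_i = fproj (e i) (r i).\<close>
definition T2 :: "(nat \<Rightarrow> real) \<Rightarrow> (nat \<Rightarrow> nat \<Rightarrow> kfun) \<Rightarrow> (nat \<Rightarrow> nat) \<Rightarrow> kfun \<Rightarrow> kfun" where
  "T2 b e r v = (\<lambda>k. v k + (\<Sum>i. complex_of_real (1 / b (Suc i) - 1) * fproj (e (Suc i)) (r (Suc i)) v k))"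

text \<open>omega_r = omega (1 - P_0) + eps_1 P_0, i.e. multiplication by |k| on |k| < eps_1 and by eps_1
  on |k| >= eps_1; omega_r^{1/2} is multiplication by the square root.\<close>
definition omega_r :: "real \<Rightarrow> vec3 \<Rightarrow> real" where
  "omega_r eps1 k = (if norm k < eps1 then norm k else eps1)"

definition omega_r_sqrt :: "real \<Rightarrow> kfun \<Rightarrow> kfun" where
  "omega_r_sqrt eps1 v = (\<lambda>k. complex_of_real (sqrt (omega_r eps1 k)) * v k)"

end

theory Submission
  imports Defs
begin
lemma id_leb[measurable]: "(\<lambda>x::vec3. x) \<in> borel_measurable lebesgue"
  using id_borel_measurable_lebesgue unfolding id_def .

lemma meas_cnj[measurable]: "f \<in> borel_measurable M \<Longrightarrow> (\<lambda>x. cnj (f x)) \<in> borel_measurable M"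
  by (rule measurable_compose[where f=f]) (auto intro!: borel_measurable_continuous_onI continuous_intros)

abbreviation nrm2 :: "kfun \<Rightarrow> real" where "nrm2 f \<equiv> LINT k|lebesgue. (cmod (f k))^2"

lemma L2_meas: "f \<in> L2 \<Longrightarrow> f \<in> borel_measurable lebesgue" by (simp add: L2_def)
lemma L2_int: "f \<in> L2 \<Longrightarrow> integrable lebesgue (\<lambda>k. (cmod (f k))^2)" by (simp add: L2_def)

lemma L2_dom:
  assumes f: "f \<in> L2" and g: "g \<in> borel_measurable lebesgue" and b: "\<And>k. cmod (g k) \<le> B * cmod (f k)"
  shows "g \<in> L2"
proof -
  have "integrable lebesgue (\<lambda>k. B^2 * (cmod (f k))^2)" using L2_int[OF f] by simp
  then have "integrable lebesgue (\<lambda>k. (cmod (g k))^2)"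
  proof (rule Bochner_Integration.integrable_bound)
    show "(\<lambda>k. (cmod (g k))^2) \<in> borel_measurable lebesgue" using g by measurable
    show "AE k in lebesgue. norm ((cmod (g k))^2) \<le> norm (B^2 * (cmod (f k))^2)"
    proof (rule AE_I2)
      fix k
      have "(cmod (g k))^2 \<le> (B * cmod (f k))^2"
        by (rule power_mono[OF b]) simp
      then show "norm ((cmod (g k))^2) \<le> norm (B^2 * (cmod (f k))^2)"
        by (simp add: power_mult_distrib)
    qed
  qed
  then show ?thesis using g by (simp add: L2_def)
qed

lemma L2_cmult: assumes f: "f \<in> L2" shows "(\<lambda>k. c * f k) \<in> L2"
proof (rule L2_dom[OF f, where B="cmod c"])
  show "(\<lambda>k. c * f k) \<in> borel_measurable lebesgue" using L2_meas[OF f] by measurable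
qed (simp add: norm_mult)

lemma L2_zero: "(\<lambda>k. 0) \<in> L2"
  by (simp add: L2_def)

lemma L2_add:
  assumes f: "f \<in> L2" and g: "g \<in> L2"
  shows "(\<lambda>k. f k + g k) \<in> L2"
proof -
  have "integrable lebesgue (\<lambda>k. 2 * (cmod (f k))^2 + 2 * (cmod (g k))^2)"
    using L2_int[OF f] L2_int[OF g] by simp
  then have "integrable lebesgue (\<lambda>k. (cmod (f k + g k))^2)"
  proof (rule Bochner_Integration.integrable_bound)
    show "(\<lambda>k. (cmod (f k + g k))^2) \<in> borel_measurable lebesgue"
      using L2_meas[OF f] L2_meas[OF g] by measurable
    show "AE k in lebesgue. norm ((cmod (f k + g k))^2) \<le> norm (2 * (cmod (f k))^2 + 2 * (cmod (g k))^2)"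
    proof (rule AE_I2)
      fix k
      have "(cmod (f k + g k))^2 \<le> (cmod (f k) + cmod (g k))^2"
        by (rule power_mono[OF norm_triangle_ineq]) simp
      also have "\<dots> \<le> 2 * (cmod (f k))^2 + 2 * (cmod (g k))^2"
      proof -
        have "0 \<le> (cmod (f k) - cmod (g k))^2" by simp
        then show ?thesis unfolding power2_sum power2_diff by linarith
      qed
      finally show "norm ((cmod (f k + g k))^2) \<le> norm (2 * (cmod (f k))^2 + 2 * (cmod (g k))^2)"
        by simp
    qed
  qed
  then show ?thesis using L2_meas[OF f] L2_meas[OF g] by (simp add: L2_def)
qed

lemma L2_sum: "(\<And>i. i \<in> I \<Longrightarrow> f i \<in> L2) \<Longrightarrow> (\<lambda>k. \<Sum>i\<in>I. f i k) \<in> L2"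
proof (induction I rule: infinite_finite_induct)
  case (infinite A) then show ?case by (simp add: L2_zero)
next
  case empty then show ?case by (simp add: L2_zero)
next
  case (insert x F)
  then show ?case by (simp add: L2_add)
qed

lemma prod_int:
  assumes f: "f \<in> L2" and g: "g \<in> L2"
  shows "integrable lebesgue (\<lambda>k. cnj (f k) * g k)"
proof -
  have "integrable lebesgue (\<lambda>k. (cmod (f k))^2 + (cmod (g k))^2)"
    using L2_int[OF f] L2_int[OF g] by simp
  then show ?thesis
  proof (rule Bochner_Integration.integrable_bound)
    show "(\<lambda>k. cnj (f k) * g k) \<in> borel_measurable lebesgue"
      using L2_meas[OF f] L2_meas[OF g] by measurable
    show "AE k in lebesgue. norm (cnj (f k) * g k) \<le> norm ((cmod (f k))^2 + (cmod (g k))^2)"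
    proof (rule AE_I2)
      fix k
      have "cmod (f k) * cmod (g k) \<le> (cmod (f k))^2 + (cmod (g k))^2"
      proof -
        have "0 \<le> (cmod (f k) - cmod (g k))^2" by simp
        moreover have "0 \<le> cmod (f k) * cmod (g k)" by simp
        ultimately show ?thesis unfolding power2_diff by linarith
      qed
      then show "norm (cnj (f k) * g k) \<le> norm ((cmod (f k))^2 + (cmod (g k))^2)"
        by (simp add: norm_mult)
    qed
  qed
qed

lemma CS_real0:
  fixes X a b :: real
  assumes a: "a \<ge> 0" and b: "b \<ge> 0" and h: "\<And>t. t > 0 \<Longrightarrow> 2 * X \<le> t * a^2 + b^2 / t"
  shows "X \<le> a * b"
proof (cases "a > 0 \<and> b > 0")
  case True
  define t where "t = b / a"
  have tp: "t > 0" using True by (simp add: t_def)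
  have e1: "t * a^2 = a * b" using True unfolding t_def by (simp add: power2_eq_square)
  have e2: "b^2 / t = a * b" using True unfolding t_def by (simp add: power2_eq_square)
  show ?thesis using h[OF tp] e1 e2 by linarith
next
  case False
  show ?thesis
  proof (rule ccontr)
    assume nx: "\<not> X \<le> a * b"
    from False a b have ab: "a = 0 \<or> b = 0" by linarith
    then have X0: "X > 0" using nx by auto
    show False
    proof (cases "a = 0")
      case True
      define t where "t = b^2 / X + 1"
      have "b^2 / X \<ge> 0" using X0 by simp
      then have tp: "t > 0" unfolding t_def by linarith
      have "2 * X \<le> b^2 / t" using h[OF tp] True by simp
      moreover have "b^2 / t < X"
      proof -
        have "X * t = b^2 + X" using X0 unfolding t_def by (simp add: distrib_left)
        then have "b^2 < X * t" using X0 by linarith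
        then show ?thesis using tp by (simp add: divide_less_eq mult.commute)
      qed
      ultimately show False using X0 by linarith
    next
      case False
      then have B0: "b = 0" using ab by simp
      define t where "t = X / (a^2 + 1)"
      have ap: "a^2 + 1 > 0" by (simp add: add_nonneg_pos)
      have tp: "t > 0" using X0 ap unfolding t_def by simp
      have "2 * X \<le> t * a^2" using h[OF tp] B0 by simp
      moreover have "t * a^2 \<le> X"
      proof -
        have "t * a^2 \<le> t * (a^2 + 1)" using tp by simp
        also have "\<dots> = X" using ap unfolding t_def by simp
        finally show ?thesis .
      qed
      ultimately show False using X0 by linarith
    qed
  qed
qed

lemma CS_real:
  fixes X A B :: real
  assumes A: "A \<ge> 0" and B: "B \<ge> 0" and h: "\<And>t. t > 0 \<Longrightarrow> 2 * X \<le> t * A + B / t"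
  shows "X \<le> sqrt A * sqrt B"
  by (rule CS_real0) (use A B h in auto)

lemma CS:
  assumes f: "f \<in> L2" and g: "g \<in> L2"
  shows "cmod (l2inner f g) \<le> sqrt (nrm2 f) * sqrt (nrm2 g)"
proof -
  have i1: "integrable lebesgue (\<lambda>k. cmod (f k) * cmod (g k))"
    using integrable_norm[OF prod_int[OF f g]] by (simp add: norm_mult)
  have "cmod (l2inner f g) \<le> (LINT k|lebesgue. cmod (cnj (f k) * g k))"
    unfolding l2inner_def by (rule integral_norm_bound)
  also have "\<dots> = (LINT k|lebesgue. cmod (f k) * cmod (g k))" by (simp add: norm_mult)
  also have "\<dots> \<le> sqrt (nrm2 f) * sqrt (nrm2 g)"
  proof (rule CS_real)
    show "nrm2 f \<ge> 0" "nrm2 g \<ge> 0" by (simp_all add: integral_nonneg)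
    fix t :: real assume t: "t > 0"
    have "2 * (LINT k|lebesgue. cmod (f k) * cmod (g k)) = (LINT k|lebesgue. 2 * (cmod (f k) * cmod (g k)))"
      by simp
    also have "\<dots> \<le> (LINT k|lebesgue. t * (cmod (f k))^2 + (cmod (g k))^2 / t)"
    proof (rule integral_mono)
      show "integrable lebesgue (\<lambda>k. 2 * (cmod (f k) * cmod (g k)))" using i1 by simp
      show "integrable lebesgue (\<lambda>k. t * (cmod (f k))^2 + (cmod (g k))^2 / t)"
        using L2_int[OF f] L2_int[OF g] by simp
      fix k
      have "0 \<le> (t * cmod (f k) - cmod (g k))^2" by simp
      then have "2 * t * (cmod (f k) * cmod (g k)) \<le> t * (t * (cmod (f k))^2) + (cmod (g k))^2"
        by (simp add: power2_eq_square algebra_simps)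
      then show "2 * (cmod (f k) * cmod (g k)) \<le> t * (cmod (f k))^2 + (cmod (g k))^2 / t"
        using t by (simp add: field_simps)
    qed
    also have "\<dots> = t * nrm2 f + nrm2 g / t"
      using L2_int[OF f] L2_int[OF g] by simp
    finally show "2 * (LINT k|lebesgue. cmod (f k) * cmod (g k)) \<le> t * nrm2 f + nrm2 g / t" .
  qed
  finally show ?thesis .
qed

lemma l2inner_self: "l2inner f f = complex_of_real (nrm2 f)"
proof -
  have "\<And>z. cnj z * z = complex_of_real ((cmod z)^2)"
    by (metis complex_norm_square mult.commute)
  then show ?thesis unfolding l2inner_def by (simp only: integral_complex_of_real)
qed

lemma l2inner_sum_left:
  assumes e: "\<And>j. j < n \<Longrightarrow> e j \<in> L2" and g: "g \<in> L2"
  shows "l2inner (\<lambda>k. \<Sum>j<n. a j * e j k) g = (\<Sum>j<n. cnj (a j) * l2inner (e j) g)"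
proof -
  have "l2inner (\<lambda>k. \<Sum>j<n. a j * e j k) g = (LINT k|lebesgue. (\<Sum>j<n. cnj (a j) * (cnj (e j k) * g k)))"
    unfolding l2inner_def by (simp add: sum_distrib_right mult.assoc)
  also have "\<dots> = (\<Sum>j<n. (LINT k|lebesgue. cnj (a j) * (cnj (e j k) * g k)))"
    by (rule Bochner_Integration.integral_sum[where f="\<lambda>j k. cnj (a j) * (cnj (e j k) * g k)"]) (use prod_int[OF e g] in auto)
  also have "\<dots> = (\<Sum>j<n. cnj (a j) * l2inner (e j) g)"
    unfolding l2inner_def by simp
  finally show ?thesis .
qed

lemma l2inner_sum_right:
  assumes e: "\<And>j. j < n \<Longrightarrow> e j \<in> L2" and f: "f \<in> L2"
  shows "l2inner f (\<lambda>k. \<Sum>j<n. a j * e j k) = (\<Sum>j<n. a j * l2inner f (e j))"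
proof -
  have "l2inner f (\<lambda>k. \<Sum>j<n. a j * e j k) = (LINT k|lebesgue. (\<Sum>j<n. a j * (cnj (f k) * e j k)))"
    unfolding l2inner_def by (simp add: sum_distrib_left mult.assoc mult.left_commute)
  also have "\<dots> = (\<Sum>j<n. (LINT k|lebesgue. a j * (cnj (f k) * e j k)))"
    by (rule Bochner_Integration.integral_sum[where f="\<lambda>j k. a j * (cnj (f k) * e j k)"]) (use prod_int[OF f e] in auto)
  also have "\<dots> = (\<Sum>j<n. a j * l2inner f (e j))"
    unfolding l2inner_def by simp
  finally show ?thesis .
qed

lemma fproj_L2:
  assumes "orthonormal_fam e r" shows "fproj e r u \<in> L2"
  unfolding fproj_def
  by (rule L2_sum) (use assms in \<open>auto simp: orthonormal_fam_def intro!: L2_cmult\<close>)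

lemma contraction:
  assumes on: "orthonormal_fam e r" and u: "u \<in> L2"
  shows "nrm2 (fproj e r u) \<le> nrm2 u"
proof -
  define a where "a j = l2inner (e j) u" for j
  define Q where "Q = fproj e r u"
  have eL2: "\<And>j. j < r \<Longrightarrow> e j \<in> L2" using on by (simp add: orthonormal_fam_def)
  have Qdef: "Q = (\<lambda>k. \<Sum>j<r. a j * e j k)" unfolding Q_def fproj_def a_def ..
  have QL2: "Q \<in> L2" unfolding Q_def by (rule fproj_L2[OF on])
  have ejQ: "l2inner (e j) Q = a j" if j: "j < r" for j
  proof -
    have "l2inner (e j) Q = (\<Sum>l<r. a l * l2inner (e j) (e l))"
      unfolding Qdef by (rule l2inner_sum_right[OF eL2 eL2[OF j]])
    also have "\<dots> = (\<Sum>l<r. a l * (if j = l then 1 else 0))"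
      using on j by (simp add: orthonormal_fam_def)
    also have "\<dots> = a j" using j by (simp add: if_distrib cong: if_cong)
    finally show ?thesis .
  qed
  have "l2inner Q Q = (\<Sum>j<r. cnj (a j) * l2inner (e j) Q)"
    by (subst (1) Qdef) (rule l2inner_sum_left[OF eL2 QL2])
  also have "\<dots> = (\<Sum>j<r. cnj (a j) * a j)" using ejQ by simp
  also have "\<dots> = (\<Sum>j<r. cnj (a j) * l2inner (e j) u)" by (simp add: a_def)
  also have "\<dots> = l2inner Q u"
    unfolding Qdef by (rule l2inner_sum_left[OF eL2 u, symmetric])
  finally have eq: "complex_of_real (nrm2 Q) = l2inner Q u" by (simp add: l2inner_self)
  have n0: "nrm2 Q \<ge> 0" by (simp add: integral_nonneg)
  have "nrm2 Q = cmod (l2inner Q u)" using eq n0 by (metis norm_of_real abs_of_nonneg)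
  also have "\<dots> \<le> sqrt (nrm2 Q) * sqrt (nrm2 u)" by (rule CS[OF QL2 u])
  finally have h: "sqrt (nrm2 Q) * sqrt (nrm2 Q) \<le> sqrt (nrm2 Q) * sqrt (nrm2 u)"
    using n0 by simp
  have "sqrt (nrm2 Q) \<le> sqrt (nrm2 u)"
  proof (cases "sqrt (nrm2 Q) = 0")
    case True then show ?thesis by simp
  next
    case False
    then have "sqrt (nrm2 Q) > 0" using n0 by (simp add: less_le)
    then show ?thesis using h mult_le_cancel_left_pos[of "sqrt (nrm2 Q)" "sqrt (nrm2 Q)" "sqrt (nrm2 u)"] by blast
  qed
  then show ?thesis unfolding Q_def by simp
qed

lemma sq_add_le: "(cmod (x + y))^2 \<le> 2 * (cmod x)^2 + 2 * (cmod y)^2"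
proof -
  have "(cmod (x + y))^2 \<le> (cmod x + cmod y)^2"
    by (rule power_mono[OF norm_triangle_ineq]) simp
  also have "\<dots> \<le> 2 * (cmod x)^2 + 2 * (cmod y)^2"
  proof -
    have "0 \<le> (cmod x - cmod y)^2" by simp
    then show ?thesis unfolding power2_sum power2_diff by linarith
  qed
  finally show ?thesis .
qed

lemma Pshell_L2:
  assumes v: "v \<in> L2" shows "Pshell eps m v \<in> L2"
proof (rule L2_dom[OF v, where B=1])
  show "Pshell eps m v \<in> borel_measurable lebesgue"
    using L2_meas[OF v] unfolding Pshell_def Pcut_def by measurable
  fix k show "cmod (Pshell eps m v k) \<le> 1 * cmod (v k)"
    unfolding Pshell_def Pcut_def by auto
qed

lemma omega_norm:
  assumes e1: "e1 \<ge> 0"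
  shows "(cmod (omega_r_sqrt e1 v k))^2 = omega_r e1 k * (cmod (v k))^2"
    and "omega_r e1 k \<ge> 0" and "omega_r e1 k \<le> e1" and "omega_r e1 k \<le> norm k"
proof -
  show om0: "omega_r e1 k \<ge> 0" unfolding omega_r_def using e1 by auto
  show "omega_r e1 k \<le> e1" unfolding omega_r_def by auto
  show "omega_r e1 k \<le> norm k" unfolding omega_r_def by auto
  show "(cmod (omega_r_sqrt e1 v k))^2 = omega_r e1 k * (cmod (v k))^2"
    unfolding omega_r_sqrt_def using om0 by (simp add: norm_mult power_mult_distrib)
qed

lemma omega_L2:
  assumes e1: "e1 \<ge> 0" and v: "v \<in> L2" shows "omega_r_sqrt e1 v \<in> L2"
proof (rule L2_dom[OF v, where B="sqrt e1"])
  show "omega_r_sqrt e1 v \<in> borel_measurable lebesgue"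
    using L2_meas[OF v] unfolding omega_r_sqrt_def omega_r_def by measurable
  fix k
  have "cmod (omega_r_sqrt e1 v k) = sqrt (omega_r e1 k) * cmod (v k)"
    unfolding omega_r_sqrt_def using omega_norm(2)[OF e1] by (simp add: norm_mult)
  also have "\<dots> \<le> sqrt e1 * cmod (v k)"
    by (rule mult_right_mono) (use omega_norm(3)[OF e1] in auto)
  finally show "cmod (omega_r_sqrt e1 v k) \<le> sqrt e1 * cmod (v k)" .
qed

lemma omega_bound:
  assumes e1: "e1 \<ge> 0"
  shows "(cmod (omega_r_sqrt e1 v k))^2 \<le> e1 * (cmod (v k))^2"
  unfolding omega_norm(1)[OF e1] by (rule mult_right_mono) (use omega_norm(3)[OF e1] in auto)

lemma shell_omega:
  assumes d: "eps (Suc m) < eps m" and e1: "e1 \<ge> 0"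
  shows "(cmod (Pshell eps m (omega_r_sqrt e1 v) k))^2 \<le> eps m * (cmod (Pshell eps m v k))^2"
proof -
  have eq: "Pshell eps m (omega_r_sqrt e1 v) k = complex_of_real (sqrt (omega_r e1 k)) * Pshell eps m v k"
    unfolding Pshell_def Pcut_def omega_r_sqrt_def by (simp add: right_diff_distrib)
  have "(cmod (Pshell eps m (omega_r_sqrt e1 v) k))^2 = omega_r e1 k * (cmod (Pshell eps m v k))^2"
    unfolding eq using omega_norm(2)[OF e1] by (simp add: norm_mult power_mult_distrib)
  also have "\<dots> \<le> eps m * (cmod (Pshell eps m v k))^2"
  proof (cases "Pshell eps m v k = 0")
    case True thus ?thesis by simp
  next
    case False
    then have "norm k < eps m" using d unfolding Pshell_def Pcut_def by (auto split: if_splits)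
    then show ?thesis using omega_norm(4)[OF e1, of k] by (intro mult_right_mono) auto
  qed
  finally show ?thesis .
qed

lemma shell_tele:
  assumes dec: "\<And>i. eps (Suc (Suc i)) < eps (Suc i)"
  shows "(\<Sum>i<M. (cmod (Pshell eps (Suc i) v k))^2) \<le> (cmod (v k))^2"
proof -
  define h where "h n = (if eps (Suc n) \<le> norm k then 1 else 0 :: real)" for n
  have t: "(cmod (Pshell eps (Suc i) v k))^2 = (cmod (v k))^2 * (h (Suc i) - h i)" for i
    using dec[of i] unfolding Pshell_def Pcut_def h_def by auto
  have "(\<Sum>i<M. (cmod (Pshell eps (Suc i) v k))^2) = (cmod (v k))^2 * (\<Sum>i<M. h (Suc i) - h i)"
    by (simp add: t sum_distrib_left)
  also have "\<dots> = (cmod (v k))^2 * (h M - h 0)" by (simp add: sum_lessThan_telescope)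
  also have "\<dots> \<le> (cmod (v k))^2" unfolding h_def by auto
  finally show ?thesis .
qed

theorem lemma5p4:
  fixes eps :: "nat \<Rightarrow> real" and b :: "nat \<Rightarrow> real"
    and e :: "nat \<Rightarrow> nat \<Rightarrow> kfun" and r :: "nat \<Rightarrow> nat"
  assumes eps_pos: "\<forall>i\<ge>1. eps i > 0"
    and eps_dec: "\<forall>i\<ge>1. eps (Suc i) < eps i"
    and eps_lim: "eps \<longlonglongrightarrow> 0"
    and Q_onb: "\<forall>i\<ge>1. orthonormal_fam (e i) (r i)"
    and Q_Gam: "\<forall>i\<ge>1. \<forall>v\<in>L2. AE k in lebesgue.
                  fproj (e i) (r i) (Gam v) k = Gam (fproj (e i) (r i) v) k"
    and Q_P: "\<forall>i\<ge>1. \<forall>v\<in>L2. fproj (e i) (r i) (Pshell eps i v) = fproj (e i) (r i) v"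
    and b_range: "\<forall>i\<ge>1. 0 < b i \<and> b i < 1"
    and b_lim: "b \<longlonglongrightarrow> 0"
    and summ: "summable (\<lambda>i. eps (Suc i) / (b (Suc i))^2 * real (r (Suc i)))"
  shows "\<exists>C. \<forall>v\<in>D0. T2 b e r (omega_r_sqrt (eps 1) v) \<in> L2 \<and>
             l2norm (T2 b e r (omega_r_sqrt (eps 1) v)) \<le> C * l2norm v"
proof -
  define S where "S = suminf (\<lambda>i. eps (Suc i) / (b (Suc i))^2 * real (r (Suc i)))"
  have epsS: "eps (Suc i) > 0" for i using eps_pos by simp
  have bS: "0 < b (Suc i)" "b (Suc i) < 1" for i using b_range by auto
  have decS: "eps (Suc (Suc i)) < eps (Suc i)" for i using eps_dec by simp
  have onS: "orthonormal_fam (e (Suc i)) (r (Suc i))" for i using Q_onb by simp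
  have e1p: "eps 1 > 0" using eps_pos by simp
  have nnS: "0 \<le> eps (Suc n) / (b (Suc n))^2 * real (r (Suc n))" for n
    using epsS[of n] by simp
  have Sge: "(\<Sum>i\<in>I. eps (Suc i) / (b (Suc i))^2 * real (r (Suc i))) \<le> S" if "finite I" for I
    unfolding S_def
    by (rule sum_le_suminf[OF summ that]) (rule nnS)
  have S0: "S \<ge> 0" using Sge[of "{}"] by simp
  show ?thesis
  proof (intro exI[of _ "sqrt (2 * eps 1 + 2 * S)"] ballI conjI)
    fix v assume vD: "v \<in> D0"
    then have vL2: "v \<in> L2" and "\<exists>eps0>0. AE k in lebesgue. norm k < eps0 \<longrightarrow> v k = 0"
      by (auto simp: D0_def)
    then obtain eps0 where eps0: "eps0 > 0" and vAE: "AE k in lebesgue. norm k < eps0 \<longrightarrow> v k = 0"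
      by blast
    define w where "w = omega_r_sqrt (eps 1) v"
    have wL2: "w \<in> L2" unfolding w_def by (rule omega_L2) (use e1p vL2 in auto)
    define Q where "Q m = fproj (e m) (r m)" for m
    have "eventually (\<lambda>n. eps n < eps0) sequentially"
      using eps_lim eps0 by (rule order_tendstoD(2))
    then obtain M where M: "\<And>n. n \<ge> M \<Longrightarrow> eps n < eps0"
      unfolding eventually_sequentially by blast
    have Qzero: "Q (Suc i) w = (\<lambda>k. 0)" if iM: "i \<ge> M" for i
    proof -
      have lt: "eps (Suc i) < eps0" using M iM by simp
      have AEz: "AE k in lebesgue. Pshell eps (Suc i) w k = 0"
        using vAE
      proof eventually_elim
        case (elim k)
        show ?case
        proof (cases "norm k < eps (Suc i)")
          case True
          then have "v k = 0" using elim lt by simp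
          then show ?thesis unfolding Pshell_def Pcut_def w_def omega_r_sqrt_def by simp
        next
          case False
          then show ?thesis using decS[of i] unfolding Pshell_def Pcut_def by auto
        qed
      qed
      have "l2inner (e (Suc i) j) (Pshell eps (Suc i) w) = 0" for j
        unfolding l2inner_def by (rule integral_eq_zero_AE) (use AEz in eventually_elim, simp)
      then have "fproj (e (Suc i)) (r (Suc i)) (Pshell eps (Suc i) w) = (\<lambda>k. 0)"
        unfolding fproj_def by simp
      then show ?thesis unfolding Q_def using Q_P wL2 by simp
    qed
    define c where "c m = complex_of_real (1 / b m - 1)" for m
    define F where "F i = (\<lambda>k. c (Suc i) * Q (Suc i) w k)" for i
    have T2eq: "T2 b e r w = (\<lambda>k. w k + (\<Sum>i<M. F i k))"
    proof
      fix k
      have "(\<Sum>i. complex_of_real (1 / b (Suc i) - 1) * fproj (e (Suc i)) (r (Suc i)) w k) = (\<Sum>i<M. F i k)"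
        unfolding F_def c_def Q_def[symmetric]
        by (rule suminf_finite) (use Qzero in auto)
      then show "T2 b e r w k = w k + (\<Sum>i<M. F i k)" unfolding T2_def by simp
    qed
    define I where "I = {i. i < M \<and> r (Suc i) > 0}"
    have finI: "finite I" unfolding I_def by simp
    define G where "G = (\<lambda>k. \<Sum>i\<in>I. F i k)"
    have sumI: "(\<Sum>i<M. F i k) = G k" for k
      unfolding G_def
      by (rule sum.mono_neutral_right) (auto simp: I_def F_def Q_def fproj_def)
    have T2eq2: "T2 b e r w = (\<lambda>k. w k + G k)" using T2eq sumI by simp
    define lam where "lam i = eps (Suc i) / (b (Suc i))^2" for i
    have lamp: "lam i > 0" for i unfolding lam_def using epsS[of i] bS[of i] by simp
    have FL2: "F i \<in> L2" for i
      unfolding F_def Q_def by (rule L2_cmult, rule fproj_L2, rule onS)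
    have GL2: "G \<in> L2" unfolding G_def by (rule L2_sum) (rule FL2)
    have TL2: "T2 b e r w \<in> L2" unfolding T2eq2 by (rule L2_add[OF wL2 GL2])
    then show "T2 b e r (omega_r_sqrt (eps 1) v) \<in> L2" unfolding w_def .

    have pw: "(cmod (G k))^2 \<le> (\<Sum>i\<in>I. lam i) * (\<Sum>i\<in>I. (cmod (F i k))^2 / lam i)" for k
    proof -
      have "cmod (G k) \<le> (\<Sum>i\<in>I. cmod (F i k))" unfolding G_def by (rule norm_sum)
      also have "\<dots> = (\<Sum>i\<in>I. sqrt (lam i) * (cmod (F i k) / sqrt (lam i)))"
      proof (rule sum.cong[OF refl])
        fix i have "sqrt (lam i) > 0" using lamp[of i] by simp
        then show "cmod (F i k) = sqrt (lam i) * (cmod (F i k) / sqrt (lam i))" by simp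
      qed
      finally have "(cmod (G k))^2 \<le> (\<Sum>i\<in>I. sqrt (lam i) * (cmod (F i k) / sqrt (lam i)))^2"
        by (rule power_mono) simp
      also have "\<dots> \<le> (\<Sum>i\<in>I. (sqrt (lam i))^2) * (\<Sum>i\<in>I. (cmod (F i k) / sqrt (lam i))^2)"
        by (rule Cauchy_Schwarz_ineq_sum)
      also have "\<dots> = (\<Sum>i\<in>I. lam i) * (\<Sum>i\<in>I. (cmod (F i k))^2 / lam i)"
        using lamp by (simp add: power_divide less_imp_le)
      finally show ?thesis .
    qed
    have FI: "nrm2 (F i) \<le> lam i * nrm2 (Pshell eps (Suc i) v)" for i
    proof -
      have cb: "(1 / b (Suc i) - 1)^2 \<le> (1 / b (Suc i))^2"
      proof -
        have "1 / b (Suc i) > 1" using bS[of i] by simp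
        then show ?thesis by (intro power_mono) auto
      qed
      have PwL2: "Pshell eps (Suc i) w \<in> L2" by (rule Pshell_L2[OF wL2])
      have "nrm2 (F i) = (1 / b (Suc i) - 1)^2 * nrm2 (Q (Suc i) w)"
      proof -
        have cc: "(cmod (c (Suc i)))^2 = (1 / b (Suc i) - 1)^2"
          unfolding c_def by (simp only: norm_of_real power2_abs)
        show ?thesis unfolding F_def by (simp add: norm_mult power_mult_distrib cc)
      qed
      also have "\<dots> \<le> (1 / b (Suc i))^2 * nrm2 (Q (Suc i) w)"
        by (rule mult_right_mono[OF cb]) (simp add: integral_nonneg)
      finally have F1: "nrm2 (F i) \<le> (1 / b (Suc i))^2 * nrm2 (Q (Suc i) w)" .
      have "nrm2 (Q (Suc i) w) = nrm2 (fproj (e (Suc i)) (r (Suc i)) (Pshell eps (Suc i) w))"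
        unfolding Q_def using Q_P wL2 by simp
      also have "\<dots> \<le> nrm2 (Pshell eps (Suc i) w)"
        by (rule contraction[OF onS PwL2])
      also have "\<dots> \<le> (LINT k|lebesgue. eps (Suc i) * (cmod (Pshell eps (Suc i) v k))^2)"
      proof (rule integral_mono)
        show "integrable lebesgue (\<lambda>k. (cmod (Pshell eps (Suc i) w k))^2)" by (rule L2_int[OF PwL2])
        show "integrable lebesgue (\<lambda>k. eps (Suc i) * (cmod (Pshell eps (Suc i) v k))^2)"
          using L2_int[OF Pshell_L2[OF vL2]] by simp
        fix k show "(cmod (Pshell eps (Suc i) w k))^2 \<le> eps (Suc i) * (cmod (Pshell eps (Suc i) v k))^2"
          unfolding w_def by (rule shell_omega[where eps=eps and m="Suc i", OF decS[of i]]) (use e1p in simp)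
      qed
      also have "\<dots> = eps (Suc i) * nrm2 (Pshell eps (Suc i) v)" by simp
      finally have Q1: "nrm2 (Q (Suc i) w) \<le> eps (Suc i) * nrm2 (Pshell eps (Suc i) v)" .
      have "nrm2 (F i) \<le> (1 / b (Suc i))^2 * (eps (Suc i) * nrm2 (Pshell eps (Suc i) v))"
        using F1 mult_left_mono[OF Q1, of "(1 / b (Suc i))^2"] by simp
      then show ?thesis unfolding lam_def by (simp add: power_divide)
    qed
    have intG: "nrm2 G \<le> (\<Sum>i\<in>I. lam i) * (\<Sum>i\<in>I. nrm2 (F i) / lam i)"
    proof -
      have ints: "integrable lebesgue (\<lambda>k. (cmod (F i k))^2 / lam i)" for i
        using L2_int[OF FL2[of i]] by simp
      have "nrm2 G \<le> (LINT k|lebesgue. (\<Sum>i\<in>I. lam i) * (\<Sum>i\<in>I. (cmod (F i k))^2 / lam i))"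
      proof (rule integral_mono)
        show "integrable lebesgue (\<lambda>k. (cmod (G k))^2)" by (rule L2_int[OF GL2])
        show "integrable lebesgue (\<lambda>k. (\<Sum>i\<in>I. lam i) * (\<Sum>i\<in>I. (cmod (F i k))^2 / lam i))"
          using ints by (intro integrable_mult_right Bochner_Integration.integrable_sum) auto
      qed (rule pw)
      also have "\<dots> = (\<Sum>i\<in>I. lam i) * (LINT k|lebesgue. (\<Sum>i\<in>I. (cmod (F i k))^2 / lam i))"
        by simp
      also have "(LINT k|lebesgue. (\<Sum>i\<in>I. (cmod (F i k))^2 / lam i)) = (\<Sum>i\<in>I. (LINT k|lebesgue. (cmod (F i k))^2 / lam i))"
        by (rule Bochner_Integration.integral_sum[where f="\<lambda>i k. (cmod (F i k))^2 / lam i"]) (rule ints)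
      also have "\<dots> = (\<Sum>i\<in>I. nrm2 (F i) / lam i)" by simp
      finally show ?thesis .
    qed
    have sumP: "(\<Sum>i\<in>I. nrm2 (F i) / lam i) \<le> nrm2 v"
    proof -
      have intP: "integrable lebesgue (\<lambda>k. (cmod (Pshell eps (Suc i) v k))^2)" for i
        by (rule L2_int[OF Pshell_L2[OF vL2]])
      have "(\<Sum>i\<in>I. nrm2 (F i) / lam i) \<le> (\<Sum>i\<in>I. nrm2 (Pshell eps (Suc i) v))"
      proof (rule sum_mono)
        fix i show "nrm2 (F i) / lam i \<le> nrm2 (Pshell eps (Suc i) v)"
          using FI[of i] lamp[of i] by (simp add: pos_divide_le_eq mult.commute)
      qed
      also have "\<dots> \<le> (\<Sum>i<M. nrm2 (Pshell eps (Suc i) v))"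
        by (rule sum_mono2) (auto simp: I_def integral_nonneg)
      also have "\<dots> = (LINT k|lebesgue. (\<Sum>i<M. (cmod (Pshell eps (Suc i) v k))^2))"
        by (rule Bochner_Integration.integral_sum[where f="\<lambda>i k. (cmod (Pshell eps (Suc i) v k))^2", symmetric]) (rule intP)
      also have "\<dots> \<le> nrm2 v"
      proof (rule integral_mono)
        show "integrable lebesgue (\<lambda>k. \<Sum>i<M. (cmod (Pshell eps (Suc i) v k))^2)"
          using intP by (intro Bochner_Integration.integrable_sum) auto
        show "integrable lebesgue (\<lambda>k. (cmod (v k))^2)" by (rule L2_int[OF vL2])
      qed (rule shell_tele[where eps=eps, OF decS])
      finally show ?thesis .
    qed
    have lamS: "(\<Sum>i\<in>I. lam i) \<le> S"
    proof -
      have "(\<Sum>i\<in>I. lam i) \<le> (\<Sum>i\<in>I. eps (Suc i) / (b (Suc i))^2 * real (r (Suc i)))"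
      proof (rule sum_mono)
        fix i assume "i \<in> I"
        then have "real (r (Suc i)) \<ge> 1" unfolding I_def by simp
        then show "lam i \<le> eps (Suc i) / (b (Suc i))^2 * real (r (Suc i))"
          using lamp[of i] unfolding lam_def[symmetric] by (metis mult_le_cancel_left1 mult.commute less_imp_le mult_left_mono mult_1_right)
      qed
      also have "\<dots> \<le> S" by (rule Sge[OF finI])
      finally show ?thesis .
    qed
    have nv0: "nrm2 v \<ge> 0" by (simp add: integral_nonneg)
    have nG: "nrm2 G \<le> S * nrm2 v"
    proof -
      have "(\<Sum>i\<in>I. nrm2 (F i) / lam i) \<ge> 0"
        using lamp by (intro sum_nonneg divide_nonneg_pos) (auto simp: integral_nonneg)
      then have "(\<Sum>i\<in>I. lam i) * (\<Sum>i\<in>I. nrm2 (F i) / lam i) \<le> S * nrm2 v"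
        using lamS sumP S0 by (intro mult_mono) auto
      then show ?thesis using intG by linarith
    qed
    have nw: "nrm2 w \<le> eps 1 * nrm2 v"
    proof -
      have "nrm2 w \<le> (LINT k|lebesgue. eps 1 * (cmod (v k))^2)"
      proof (rule integral_mono)
        show "integrable lebesgue (\<lambda>k. (cmod (w k))^2)" by (rule L2_int[OF wL2])
        show "integrable lebesgue (\<lambda>k. eps 1 * (cmod (v k))^2)" using L2_int[OF vL2] by simp
        fix k show "(cmod (w k))^2 \<le> eps 1 * (cmod (v k))^2"
          unfolding w_def by (rule omega_bound) (use e1p in simp)
      qed
      then show ?thesis by simp
    qed
    have nT: "nrm2 (T2 b e r w) \<le> 2 * nrm2 w + 2 * nrm2 G"
    proof -
      have "nrm2 (T2 b e r w) \<le> (LINT k|lebesgue. 2 * (cmod (w k))^2 + 2 * (cmod (G k))^2)"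
      proof (rule integral_mono)
        show "integrable lebesgue (\<lambda>k. (cmod (T2 b e r w k))^2)" by (rule L2_int[OF TL2])
        show "integrable lebesgue (\<lambda>k. 2 * (cmod (w k))^2 + 2 * (cmod (G k))^2)"
          using L2_int[OF wL2] L2_int[OF GL2] by simp
        fix k show "(cmod (T2 b e r w k))^2 \<le> 2 * (cmod (w k))^2 + 2 * (cmod (G k))^2"
          unfolding T2eq2 by (rule sq_add_le)
      qed
      also have "\<dots> = 2 * nrm2 w + 2 * nrm2 G"
        using L2_int[OF wL2] L2_int[OF GL2] by simp
      finally show ?thesis .
    qed
    have fin: "nrm2 (T2 b e r w) \<le> (2 * eps 1 + 2 * S) * nrm2 v"
      using nT nw nG by (simp add: algebra_simps)
    have "l2norm (T2 b e r w) = sqrt (nrm2 (T2 b e r w))" unfolding l2norm_def ..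
    also have "\<dots> \<le> sqrt ((2 * eps 1 + 2 * S) * nrm2 v)" using fin by (rule real_sqrt_le_mono)
    also have "\<dots> = sqrt (2 * eps 1 + 2 * S) * l2norm v" unfolding l2norm_def by (simp add: real_sqrt_mult)
    finally show "l2norm (T2 b e r (omega_r_sqrt (eps 1) v)) \<le> sqrt (2 * eps 1 + 2 * S) * l2norm v"
      unfolding w_def .
  qed
qed

end
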